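(* There is no algorithm that preprocesses an algebraic equation $P$ in polynomial time and subsequently decides, in time sublinear in $|P|$, whether a given assignment $A$ is a root of $P$; i.e., $\mathrm{AERP}\notin$ PsT.
   Context: A decision problem is a set of pairs $\langle D,P\rangle$ of strings (data part $D$, problem part $P$). AERP (Algebraic Equation Root Problem): data part is a polynomial (algebraic) equation $P$ with integer coefficients in variables $x_1,\dots,x_d$, problem part is an assignment $A=(a_1,\dots,a_d)$; the pair is in AERP iff $A$ is a root of $P$. A random-access Turing machine (RATM) is a multitape Turing machine with a read-only input tape and work tapes, each with an associated binary index tape, and a special random-access state that in one step moves each non-index tape head to the cell addressed by its index tape. PsT is the class of decision problems $\mathcal{P}$ for which there exist a polynomial-time computable function $\Pi$ and an RATM $M$ such that for every pair $\langle D,P\rangle$, $M$ on input $(\Pi(D),P)$ decides whether $\langle D,P\rangle\in\mathcal{P}$ in time $o(|D|)$. *)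

theory Defs
  imports Main "HOL-Library.Landau_Symbols"
begin

text \<open>Strings are binary ('bool list'). Decision problems are sets of pairs
  (data part, problem part).\<close>

type_synonym bstring = "bool list"
type_synonym decision_problem = "(bstring \<times> bstring) set"

fun nat_bits :: "nat \<Rightarrow> bool list" where
  "nat_bits n = (if n = 0 then [] else odd n # nat_bits (n div 2))"

text \<open>Self-delimiting encoding: every bit is doubled, the terminator is 01.\<close>
definition dbl :: "bool list \<Rightarrow> bool list" where
  "dbl bs = concat (map (\<lambda>b. [b, b]) bs) @ [False, True]"

definition enc_nat :: "nat \<Rightarrow> bstring" where
  "enc_nat n = dbl (nat_bits n)"

definition enc_int :: "int \<Rightarrow> bstring" where
  "enc_int i = (i < 0) # enc_nat (nat \<bar>i\<bar>)"

definition enc_list :: "('a \<Rightarrow> bstring) \<Rightarrow> 'a list \<Rightarrow> bstring" where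
  "enc_list f xs = enc_nat (length xs) @ concat (map f xs)"

text \<open>An algebraic equation \<open>p(x_1,...,x_d) = 0\<close> with integer coefficients is
  given by the number of variables d and a list of monomials (coefficient,
  exponent vector of length d).\<close>
type_synonym alg_eq = "nat \<times> (int \<times> nat list) list"

definition wf_eq :: "alg_eq \<Rightarrow> bool" where
  "wf_eq E = (\<forall>m \<in> set (snd E). length (snd m) = fst E)"

definition enc_eq :: "alg_eq \<Rightarrow> bstring" where
  "enc_eq E = enc_nat (fst E) @
     enc_list (\<lambda>(c, es). enc_int c @ concat (map enc_nat es)) (snd E)"

definition enc_assign :: "int list \<Rightarrow> bstring" where
  "enc_assign A = enc_list enc_int A"

definition eval_eq :: "alg_eq \<Rightarrow> int list \<Rightarrow> int" where
  "eval_eq E A = sum_list (map (\<lambda>(c, es). c * (\<Prod>i<fst E. (A ! i) ^ (es ! i))) (snd E))"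

definition AERP :: decision_problem where
  "AERP = {(enc_eq E, enc_assign A) | E A.
             wf_eq E \<and> length A = fst E \<and> eval_eq E A = 0}"

text \<open>Tape symbols are naturals below nsyms; 0 is the blank, 1/2 encode the bits
  0/1, 3 is a separator. With k work tapes there are m = 2(k+1) tapes:
  tape 0 is the read-only input tape, tapes 1..k are work tapes, and tape
  k+1+j is the (binary, least significant bit in cell 0) index tape of tape j.
  Cells are indexed by naturals; a head moving left from cell 0 stays there. In the random-access state, every
  non-index head jumps to the cell addressed by its index tape and control
  passes to state raret.\<close>

record ratm =
  nstates :: nat
  nsyms :: nat
  nwork :: nat
  start :: nat
  acc :: nat
  rej :: nat
  rastate :: nat
  raret :: nat
  delta :: "nat \<Rightarrow> nat list \<Rightarrow> nat \<times> nat list \<times> int list"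

definition ntapes :: "ratm \<Rightarrow> nat" where
  "ntapes M = 2 * (nwork M + 1)"

definition wf_ratm :: "ratm \<Rightarrow> bool" where
  "wf_ratm M = (4 \<le> nsyms M \<and>
     start M < nstates M \<and> acc M < nstates M \<and> rej M < nstates M \<and>
     rastate M < nstates M \<and> raret M < nstates M \<and>
     acc M \<noteq> rej M \<and> rastate M \<noteq> acc M \<and> rastate M \<noteq> rej M \<and>
     (\<forall>q < nstates M. \<forall>syms. length syms = ntapes M \<and> (\<forall>s \<in> set syms. s < nsyms M) \<longrightarrow>
        (case delta M q syms of (q', w, mv) \<Rightarrow>
           q' < nstates M \<and> length w = ntapes M \<and> (\<forall>s \<in> set w. s < nsyms M) \<and>
           length mv = ntapes M \<and> set mv \<subseteq> {-1, 0, 1})))"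

type_synonym config = "nat \<times> (nat \<Rightarrow> nat) list \<times> nat list"

definition addr :: "(nat \<Rightarrow> nat) \<Rightarrow> nat" where
  "addr t = (let L = (LEAST i. t i \<notin> {1, 2}) in
             \<Sum>i<L. (if t i = 2 then 2 ^ i else 0))"

definition step :: "ratm \<Rightarrow> config \<Rightarrow> config" where
  "step M c = (case c of (q, ts, hs) \<Rightarrow>
     (if q = acc M \<or> q = rej M then (q, ts, hs)
      else if q = rastate M then
        (raret M, ts,
         map (\<lambda>j. if j \<le> nwork M then addr (ts ! (nwork M + 1 + j)) else hs ! j) [0..<ntapes M])
      else (case delta M q (map (\<lambda>j. (ts ! j) (hs ! j)) [0..<ntapes M]) of (q', w, mv) \<Rightarrow>
        (q',
         map (\<lambda>j. if j = 0 then ts ! j else (ts ! j)((hs ! j) := w ! j)) [0..<ntapes M],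
         map (\<lambda>j. nat (int (hs ! j) + mv ! j)) [0..<ntapes M]))))"

definition init_config :: "ratm \<Rightarrow> nat list \<Rightarrow> config" where
  "init_config M inp =
     (start M, (\<lambda>i. if i < length inp then inp ! i else 0) # replicate (ntapes M - 1) (\<lambda>_. 0),
      replicate (ntapes M) 0)"

definition run :: "ratm \<Rightarrow> nat \<Rightarrow> config \<Rightarrow> config" where
  "run M n c = (step M ^^ n) c"

definition sym :: "bool \<Rightarrow> nat" where
  "sym b = (if b then 2 else 1)"

definition decides_within :: "ratm \<Rightarrow> nat list \<Rightarrow> nat \<Rightarrow> bool \<Rightarrow> bool" where
  "decides_within M inp t ans =
     (case run M t (init_config M inp) of (q, _, _) \<Rightarrow>
        (q = acc M \<or> q = rej M) \<and> (q = acc M \<longleftrightarrow> ans))"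

definition poly_time_computable :: "(bstring \<Rightarrow> bstring) \<Rightarrow> bool" where
  "poly_time_computable f = (\<exists>M c e. wf_ratm M \<and> 1 \<le> nwork M \<and>
     (\<forall>w. case run M (c * (length w + 1) ^ e) (init_config M (map sym w)) of (q, ts, _) \<Rightarrow>
        q = acc M \<and> (\<forall>i < length (f w). (ts ! 1) i = sym (f w ! i)) \<and>
        (ts ! 1) (length (f w)) = 0))"

definition pair_input :: "bstring \<Rightarrow> bstring \<Rightarrow> nat list" where
  "pair_input X P = map sym X @ [3] @ map sym P"

definition PsT :: "decision_problem set" where
  "PsT = {Prob. \<exists>Pi M T. poly_time_computable Pi \<and> wf_ratm M \<and>
            (\<lambda>n. real (T n)) \<in> o(\<lambda>n. real n) \<and>
            (\<forall>D P. decides_within M (pair_input (Pi D) P) (T (length D)) ((D, P) \<in> Prob))}"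

end

theory Submission imports Defs begin
declare nat_bits.simps[simp del]
lemma nb0[simp]: "nat_bits 0 = []" by (subst nat_bits.simps) simp
lemma nbS: "n > 0 \<Longrightarrow> nat_bits n = odd n # nat_bits (n div 2)" by (subst nat_bits.simps) simp
lemma nb_len: "2^k \<le> n \<Longrightarrow> k < length (nat_bits n)"
proof (induction k arbitrary: n)
  case 0 then show ?case by (simp add: nbS)
next
  case (Suc k)
  then have "2^k \<le> n div 2" by (simp add: le_div_geq)
  moreover have "n > 0" using Suc.prems by (metis le_0_eq not_gr0 power_not_zero zero_neq_numeral)
  ultimately show ?case using Suc.IH by (simp add: nbS)
qed
lemma nb_inj: "nat_bits n = nat_bits m \<Longrightarrow> n = m"
proof (induction n arbitrary: m rule: less_induct)
  case (less n)
  show ?case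
  proof (cases "n = 0")
    case True then show ?thesis using less.prems by (cases "m = 0") (auto simp: nbS)
  next
    case False
    then have m: "m \<noteq> 0" using less.prems by (cases "m = 0") (auto simp: nbS)
    then have "odd n = odd m" "nat_bits (n div 2) = nat_bits (m div 2)" using less.prems False by (auto simp: nbS)
    moreover have "n div 2 < n" using False by simp
    ultimately have "n div 2 = m div 2" "odd n = odd m" using less.IH by auto
    then show ?thesis by (metis div_mult_mod_eq odd_iff_mod_2_eq_one not_mod_2_eq_1_eq_0)
  qed
qed
lemma dbl_Nil[simp]: "dbl [] = [False, True]" by (simp add: dbl_def)
lemma dbl_Cons[simp]: "dbl (x # xs) = x # x # dbl xs" by (simp add: dbl_def)
lemma dbl_prefix: "dbl xs @ r = dbl ys @ r' \<Longrightarrow> xs = ys"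
  by (induction xs arbitrary: ys) (case_tac ys; auto)+
lemma dbl_len: "length (dbl xs) = 2 * length xs + 2" by (induction xs) auto
lemma dbl_nth: "i < 2 * length xs \<Longrightarrow> dbl xs ! i = xs ! (i div 2)"
proof (induction xs arbitrary: i)
  case (Cons x xs) then show ?case
    by (cases i; cases "i - 1") (auto simp: nth_Cons')
qed simp
lemma enc_nat_prefix: "enc_nat n @ r = enc_nat m @ r' \<Longrightarrow> n = m"
  unfolding enc_nat_def by (metis dbl_prefix nb_inj)

definition swap0 :: "(nat \<Rightarrow> nat) \<Rightarrow> config \<Rightarrow> config" where
  "swap0 f c = (fst c, (fst (snd c))[0 := f], snd (snd c))"

lemma ntapes_pos: "0 < ntapes M" by (simp add: ntapes_def)

lemma step_inv:
  assumes "length ts = ntapes M"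
  shows "length (fst (snd (step M (q, ts, hs)))) = ntapes M \<and> fst (snd (step M (q, ts, hs))) ! 0 = ts ! 0"
  using assms ntapes_pos[of M] unfolding step_def
  by (auto split: prod.splits)

lemma step_swap:
  assumes len: "length ts = ntapes M" and rd: "f (hs ! 0) = (ts ! 0) (hs ! 0)"
  shows "step M (q, ts[0 := f], hs) = swap0 f (step M (q, ts, hs))"
proof -
  have rd': "map (\<lambda>j. (ts[0 := f] ! j) (hs ! j)) [0..<ntapes M] = map (\<lambda>j. (ts ! j) (hs ! j)) [0..<ntapes M]"
    using rd len by (auto simp: nth_list_update)
  have ra: "map (\<lambda>j. if j \<le> nwork M then addr (ts[0 := f] ! (nwork M + 1 + j)) else hs ! j) [0..<ntapes M]
      = map (\<lambda>j. if j \<le> nwork M then addr (ts ! (nwork M + 1 + j)) else hs ! j) [0..<ntapes M]"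
    by (auto simp: nth_list_update)
  have wr: "\<And>w. map (\<lambda>j. if j = 0 then ts[0 := f] ! j else (ts[0 := f] ! j)((hs ! j) := w ! j)) [0..<ntapes M]
      = (map (\<lambda>j. if j = 0 then ts ! j else (ts ! j)((hs ! j) := w ! j)) [0..<ntapes M])[0 := f]"
    using len ntapes_pos[of M] by (intro nth_equalityI) (auto simp: nth_list_update)
  show ?thesis
    unfolding step_def swap0_def using len ntapes_pos[of M]
    by (auto simp: rd' ra wr split: prod.splits)
qed

lemma run_Suc: "run M (Suc n) c = step M (run M n c)"
  by (simp add: run_def)

lemma run_inv:
  assumes "length (fst (snd c)) = ntapes M"
  shows "length (fst (snd (run M n c))) = ntapes M \<and> fst (snd (run M n c)) ! 0 = fst (snd c) ! 0"
proof (induction n)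
  case 0 then show ?case using assms by (simp add: run_def)
next
  case (Suc n)
  obtain q ts hs where e: "run M n c = (q, ts, hs)" by (cases "run M n c") auto
  show ?case using Suc step_inv[of ts M q hs] by (simp add: run_Suc e)
qed

lemma run_swap:
  assumes len: "length (fst (snd c)) = ntapes M"
    and rd: "\<And>k. k < n \<Longrightarrow> f (snd (snd (run M k c)) ! 0) = (fst (snd c) ! 0) (snd (snd (run M k c)) ! 0)"
  shows "run M n (swap0 f c) = swap0 f (run M n c)"
  using rd
proof (induction n)
  case 0 then show ?case by (simp add: run_def)
next
  case (Suc n)
  obtain q ts hs where e: "run M n c = (q, ts, hs)" by (cases "run M n c") auto
  have IH: "run M n (swap0 f c) = swap0 f (run M n c)" using Suc by auto
  have l: "length ts = ntapes M" "ts ! 0 = fst (snd c) ! 0" using run_inv[OF len, of n] e by auto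
  have "f (hs ! 0) = (ts ! 0) (hs ! 0)" using Suc.prems[of n] e l by simp
  then show ?case using IH step_swap[OF l(1)] by (simp add: run_Suc e swap0_def)
qed

lemma enc_assign1: "enc_assign [a] = enc_nat 1 @ enc_int a"
  by (simp add: enc_assign_def enc_list_def)

lemma notin_AERP:
  assumes j: "j < 2 * length bs"
  shows "(enc_eq (1, []), enc_nat 1 @ False # (dbl bs)[j := \<not> dbl bs ! j]) \<notin> AERP"
proof
  let ?Y = "(dbl bs)[j := \<not> dbl bs ! j]"
  assume "(enc_eq (1, []), enc_nat 1 @ False # ?Y) \<in> AERP"
  then obtain E A where eq: "enc_eq (1, []) = enc_eq E" "enc_nat 1 @ False # ?Y = enc_assign A"
    and lA: "length A = fst E" unfolding AERP_def by auto
  from eq(1) have "fst E = 1" unfolding enc_eq_def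
    by (metis enc_nat_prefix fst_conv)
  with lA obtain a where A: "A = [a]" by (cases A) auto
  from eq(2) have "False # ?Y = enc_int a" by (simp add: A enc_assign1)
  then have Y: "?Y = dbl (nat_bits (nat \<bar>a\<bar>))" by (simp add: enc_int_def enc_nat_def)
  let ?cs = "nat_bits (nat \<bar>a\<bar>)"
  have "length ?cs = length bs" using arg_cong[OF Y, of length] by (simp add: dbl_len)
  define j' where "j' = (if even j then j + 1 else j - 1)"
  have j': "j' < 2 * length bs" "j' \<noteq> j" "j' div 2 = j div 2" using j unfolding j'_def
    by (auto elim!: evenE oddE)
  have "?Y ! j = ?Y ! j'"
    using Y dbl_nth[of j ?cs] dbl_nth[of j' ?cs] j j' \<open>length ?cs = length bs\<close> by simp
  moreover have "?Y ! j = (\<not> dbl bs ! j)" using j by (simp add: dbl_len)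
  moreover have "?Y ! j' = dbl bs ! j'" using j' by simp
  moreover have "dbl bs ! j' = dbl bs ! j" using dbl_nth[of j bs] dbl_nth[of j' bs] j j' by simp
  ultimately show False by simp
qed

theorem mainTheorem5:
  shows "AERP \<notin> PsT"
proof
  assume "AERP \<in> PsT"
  then obtain Pi M T where dec: "\<And>D P. decides_within M (pair_input (Pi D) P) (T (length D)) ((D, P) \<in> AERP)"
    unfolding PsT_def by blast
  define D where "D = enc_eq (1, [])"
  define t where "t = T (length D)"
  define X where "X = Pi D"
  define bs where "bs = nat_bits (2 ^ t)"
  have lbs: "t < length bs" unfolding bs_def by (rule nb_len) simp
  define P where "P = enc_nat 1 @ False # dbl bs"
  have P_in: "(D, P) \<in> AERP"
  proof -
    have "P = enc_assign [int (2 ^ t)]" by (simp add: P_def enc_assign1 enc_int_def enc_nat_def bs_def nat_power_eq)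
    then show ?thesis unfolding AERP_def D_def
      by (auto simp: wf_eq_def eval_eq_def intro!: exI[of _ "[]"] exI[of _ "[int (2 ^ t)]"])
  qed
  define inp1 where "inp1 = pair_input X P"
  define c1 where "c1 = init_config M inp1"
  define R where "R = (\<lambda>k. snd (snd (run M k c1)) ! 0) ` {..<t}"
  define base where "base = length X + 1 + length (enc_nat 1) + 1"
  have "card R \<le> t" unfolding R_def by (metis card_image_le card_lessThan finite_lessThan)
  moreover have "card ((\<lambda>j. base + j) ` {..<2 * length bs}) = 2 * length bs"
    by (simp add: card_image)
  ultimately have "\<not> (\<lambda>j. base + j) ` {..<2 * length bs} \<subseteq> R"
    using lbs by (metis card_mono finite_imageI finite_lessThan R_def linorder_not_le
        less_le_trans mult_2 trans_less_add1)
  then obtain j where j: "j < 2 * length bs" "base + j \<notin> R" by auto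
  define Y where "Y = (dbl bs)[j := \<not> dbl bs ! j]"
  define P' where "P' = enc_nat 1 @ False # Y"
  have P'_out: "(D, P') \<notin> AERP" unfolding P'_def Y_def D_def by (rule notin_AERP[OF j(1)])
  define inp2 where "inp2 = pair_input X P'"
  have l2: "length inp2 = length inp1"
    by (simp add: inp1_def inp2_def pair_input_def P_def P'_def Y_def)
  have diff: "\<And>p. p \<noteq> base + j \<Longrightarrow> p < length inp1 \<Longrightarrow> inp2 ! p = inp1 ! p"
  proof -
    fix p assume p: "p \<noteq> base + j" "p < length inp1"
    have "inp2 = inp1[base + j := sym (\<not> dbl bs ! j)]"
      unfolding inp1_def inp2_def pair_input_def P_def P'_def Y_def base_def
      by (simp add: list_update_append map_update)
    then show "inp2 ! p = inp1 ! p" using p by simp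
  qed
  define f1 where "f1 = (\<lambda>i. if i < length inp1 then inp1 ! i else 0)"
  define f2 where "f2 = (\<lambda>i. if i < length inp2 then inp2 ! i else 0)"
  have init2: "init_config M inp2 = swap0 f2 c1"
    unfolding c1_def init_config_def swap0_def f2_def
    by (cases "ntapes M") (simp_all add: ntapes_def)
  have len: "length (fst (snd c1)) = ntapes M"
    unfolding c1_def init_config_def using ntapes_pos[of M] by simp
  have tape0: "fst (snd c1) ! 0 = f1" unfolding c1_def init_config_def f1_def by simp
  have "run M t (swap0 f2 c1) = swap0 f2 (run M t c1)"
  proof (rule run_swap[OF len])
    fix k assume k: "k < t"
    have "snd (snd (run M k c1)) ! 0 \<in> R" unfolding R_def using k by simp
    then have "snd (snd (run M k c1)) ! 0 \<noteq> base + j" using j(2) by metis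
    then show "f2 (snd (snd (run M k c1)) ! 0) = (fst (snd c1) ! 0) (snd (snd (run M k c1)) ! 0)"
      unfolding tape0 f1_def f2_def using l2 diff by auto
  qed
  then have st: "fst (run M t (init_config M inp2)) = fst (run M t c1)"
    unfolding init2 swap0_def by (metis fst_conv)
  have "decides_within M inp1 t True" using dec[of D P] P_in unfolding inp1_def X_def t_def by simp
  then have a1: "fst (run M t c1) = acc M" unfolding decides_within_def c1_def
    by (cases "run M t (init_config M inp1)") simp
  have "decides_within M inp2 t False" using dec[of D P'] P'_out unfolding inp2_def X_def t_def by simp
  then have a2: "fst (run M t (init_config M inp2)) \<noteq> acc M" unfolding decides_within_def
    by (cases "run M t (init_config M inp2)") simp
  show False using st a1 a2 by simp
qed
end
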